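(* Let $R$ be a local ring (with maximal ideal $\mathcal{M}$) which is Noetherian (i.e., both left and right Noetherian). If every left $R$-module generated by two elements is a direct sum of cyclic modules, then one of the following holds: (a) $R$ is an Artinian principal left ideal ring; (b) $R$ is an Artinian principal right ideal ring; (c) $R$ is a prime ring and every two-sided ideal of $R$ is principal both as a left ideal and as a right ideal.
   Context: All rings have identity and all modules are unital. A ring $R$ is local if it has a unique maximal left ideal $\mathcal{M}$ (equivalently, $R/J(R)$ is a division ring, $\mathcal{M}=J(R)$). "Artinian" means both left and right Artinian; "Noetherian" means both left and right Noetherian. *)

theory Defs
  imports Main
begin

text \<open>Rings are modelled by the type class ring_1 (associative ring with identity,
  not necessarily commutative); the ring R is the whole type.\<close>

definition left_ideal :: "'a::ring_1 set \<Rightarrow> bool" where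
  "left_ideal I \<longleftrightarrow> 0 \<in> I \<and> (\<forall>x\<in>I. \<forall>y\<in>I. x + y \<in> I) \<and> (\<forall>x\<in>I. - x \<in> I)
      \<and> (\<forall>r x. x \<in> I \<longrightarrow> r * x \<in> I)"

definition right_ideal :: "'a::ring_1 set \<Rightarrow> bool" where
  "right_ideal I \<longleftrightarrow> 0 \<in> I \<and> (\<forall>x\<in>I. \<forall>y\<in>I. x + y \<in> I) \<and> (\<forall>x\<in>I. - x \<in> I)
      \<and> (\<forall>r x. x \<in> I \<longrightarrow> x * r \<in> I)"

definition two_sided_ideal :: "'a::ring_1 set \<Rightarrow> bool" where
  "two_sided_ideal I \<longleftrightarrow> left_ideal I \<and> right_ideal I"

definition maximal_left_ideal :: "'a::ring_1 set \<Rightarrow> bool" where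
  "maximal_left_ideal M \<longleftrightarrow> left_ideal M \<and> M \<noteq> UNIV \<and>
     (\<forall>J. left_ideal J \<and> M \<subseteq> J \<and> J \<noteq> UNIV \<longrightarrow> J = M)"

definition local_ring :: "'a::ring_1 itself \<Rightarrow> bool" where
  "local_ring _ \<longleftrightarrow> (\<exists>!M::'a set. maximal_left_ideal M)"

definition left_noetherian :: "'a::ring_1 itself \<Rightarrow> bool" where
  "left_noetherian _ \<longleftrightarrow> (\<forall>I::nat \<Rightarrow> 'a set. (\<forall>n. left_ideal (I n)) \<and> (\<forall>n. I n \<subseteq> I (Suc n))
      \<longrightarrow> (\<exists>N. \<forall>n\<ge>N. I n = I N))"

definition right_noetherian :: "'a::ring_1 itself \<Rightarrow> bool" where
  "right_noetherian _ \<longleftrightarrow> (\<forall>I::nat \<Rightarrow> 'a set. (\<forall>n. right_ideal (I n)) \<and> (\<forall>n. I n \<subseteq> I (Suc n))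
      \<longrightarrow> (\<exists>N. \<forall>n\<ge>N. I n = I N))"

definition left_artinian :: "'a::ring_1 itself \<Rightarrow> bool" where
  "left_artinian _ \<longleftrightarrow> (\<forall>I::nat \<Rightarrow> 'a set. (\<forall>n. left_ideal (I n)) \<and> (\<forall>n. I (Suc n) \<subseteq> I n)
      \<longrightarrow> (\<exists>N. \<forall>n\<ge>N. I n = I N))"

definition right_artinian :: "'a::ring_1 itself \<Rightarrow> bool" where
  "right_artinian _ \<longleftrightarrow> (\<forall>I::nat \<Rightarrow> 'a set. (\<forall>n. right_ideal (I n)) \<and> (\<forall>n. I (Suc n) \<subseteq> I n)
      \<longrightarrow> (\<exists>N. \<forall>n\<ge>N. I n = I N))"

definition noetherian :: "'a::ring_1 itself \<Rightarrow> bool" where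
  "noetherian T \<longleftrightarrow> left_noetherian T \<and> right_noetherian T"

definition artinian :: "'a::ring_1 itself \<Rightarrow> bool" where
  "artinian T \<longleftrightarrow> left_artinian T \<and> right_artinian T"

definition principal_left_ideal_ring :: "'a::ring_1 itself \<Rightarrow> bool" where
  "principal_left_ideal_ring _ \<longleftrightarrow> (\<forall>I::'a set. left_ideal I \<longrightarrow> (\<exists>a. I = {r * a | r. True}))"

definition principal_right_ideal_ring :: "'a::ring_1 itself \<Rightarrow> bool" where
  "principal_right_ideal_ring _ \<longleftrightarrow> (\<forall>I::'a set. right_ideal I \<longrightarrow> (\<exists>a. I = {a * r | r. True}))"

definition prime_ring :: "'a::ring_1 itself \<Rightarrow> bool" where
  "prime_ring _ \<longleftrightarrow> (0::'a) \<noteq> 1 \<and> (\<forall>a b::'a. (\<forall>r. a * r * b = 0) \<longrightarrow> a = 0 \<or> b = 0)"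

text \<open>Left modules generated by two elements are, up to isomorphism, exactly the quotients
  R^2/N of the free left module R^2 = R \<times> R by a left submodule N.\<close>

definition left_submodule2 :: "('a::ring_1 \<times> 'a) set \<Rightarrow> bool" where
  "left_submodule2 N \<longleftrightarrow> (0, 0) \<in> N
     \<and> (\<forall>u\<in>N. \<forall>v\<in>N. (fst u + fst v, snd u + snd v) \<in> N)
     \<and> (\<forall>u\<in>N. (- fst u, - snd u) \<in> N)
     \<and> (\<forall>r u. u \<in> N \<longrightarrow> (r * fst u, r * snd u) \<in> N)"

definition lin2 :: "('a::ring_1 \<times> 'a) set \<Rightarrow> ('a \<times> 'a \<Rightarrow> 'a) \<Rightarrow> 'a \<times> 'a" where
  "lin2 S c = ((\<Sum>s\<in>S. c s * fst s), (\<Sum>s\<in>S. c s * snd s))"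

text \<open>R^2/N is the (internal) direct sum of the cyclic submodules R \<bar>s\<bar>, s \<in> S:
  the classes of S generate, and a relation \<Sum> c_s \<bar>s\<bar> = 0 forces every c_s \<bar>s\<bar> = 0.\<close>
definition quot2_dsum_cyclic :: "('a::ring_1 \<times> 'a) set \<Rightarrow> bool" where
  "quot2_dsum_cyclic N \<longleftrightarrow> (\<exists>S. finite S
     \<and> (\<forall>v. \<exists>c. (fst v - fst (lin2 S c), snd v - snd (lin2 S c)) \<in> N)
     \<and> (\<forall>c. lin2 S c \<in> N \<longrightarrow> (\<forall>s\<in>S. (c s * fst s, c s * snd s) \<in> N)))"

end

theory Submission imports Defs begin
lemma acc_reach:
  assumes acc: "\<forall>I::nat \<Rightarrow> 'b set. (\<forall>n. P (I n)) \<and> (\<forall>n. I n \<subseteq> I (Suc n)) \<longrightarrow> (\<exists>N. \<forall>n\<ge>N. I n = I N)"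
    and start: "P A" "Q A"
    and step: "\<And>X. P X \<Longrightarrow> Q X \<Longrightarrow> \<not> G X \<Longrightarrow> \<exists>Y. P Y \<and> Q Y \<and> X \<subset> Y"
  shows "\<exists>X. P X \<and> Q X \<and> G X"
proof (rule ccontr)
  assume nex: "\<not> ?thesis"
  define I where "I = rec_nat A (\<lambda>n X. SOME Y. P Y \<and> Q Y \<and> X \<subset> Y)"
  have I0: "I 0 = A" by (simp add: I_def)
  have IS: "I (Suc n) = (SOME Y. P Y \<and> Q Y \<and> I n \<subset> Y)" for n by (simp add: I_def)
  have key: "P X \<Longrightarrow> Q X \<Longrightarrow> P (SOME Y. P Y \<and> Q Y \<and> X \<subset> Y) \<and> Q (SOME Y. P Y \<and> Q Y \<and> X \<subset> Y) \<and> X \<subset> (SOME Y. P Y \<and> Q Y \<and> X \<subset> Y)" for X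
  proof -
    assume "P X" "Q X"
    then have "\<exists>Y. P Y \<and> Q Y \<and> X \<subset> Y" using step nex by blast
    from someI_ex[OF this] show ?thesis by blast
  qed
  have inv: "P (I n) \<and> Q (I n)" for n
  proof (induction n)
    case 0 then show ?case using start I0 by simp
  next
    case (Suc n)
    then show ?case using key[of "I n"] IS[of n] by simp
  qed
  have strict: "I n \<subset> I (Suc n)" for n
    using key[of "I n"] IS[of n] inv[of n] by simp
  have "\<forall>n. I n \<subseteq> I (Suc n)" using strict by auto
  moreover have "\<forall>n. P (I n)" using inv by auto
  ultimately have "\<exists>N. \<forall>n\<ge>N. I n = I N" using mp[OF spec[OF acc, of I]] by simp
  then obtain N where "\<forall>n\<ge>N. I n = I N" ..
  then have "I (Suc N) = I N" using le_SucI by blast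
  then show False using strict[of N] by simp
qed

definition RP :: "'a::ring_1 \<Rightarrow> 'a set" where "RP a = {a * r | r. True}"
definition LP :: "'a::ring_1 \<Rightarrow> 'a set" where "LP a = {r * a | r. True}"
lemma RP_iff: "x \<in> RP a \<longleftrightarrow> (\<exists>r. x = a * r)" by (simp add: RP_def)
lemma LP_iff: "x \<in> LP a \<longleftrightarrow> (\<exists>r. x = r * a)" by (simp add: LP_def)

lemma lprinc: "left_ideal {r * x | r. True}"
  unfolding left_ideal_def
proof (intro conjI ballI allI impI)
  show "0 \<in> {r * x |r. True}" by (rule CollectI, rule exI[of _ 0]) simp
next
  fix a b assume "a \<in> {r * x |r. True}" "b \<in> {r * x |r. True}"
  then obtain r s where "a = r * x" "b = s * x" by blast
  then show "a + b \<in> {r * x |r. True}" by (intro CollectI exI[of _ "r + s"]) (simp add: distrib_right)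
next
  fix a assume "a \<in> {r * x |r. True}"
  then obtain r where "a = r * x" by blast
  then show "- a \<in> {r * x |r. True}" by (intro CollectI exI[of _ "- r"]) simp
next
  fix r a assume "a \<in> {r * x |r. True}"
  then obtain s where "a = s * x" by blast
  then show "r * a \<in> {r * x |r. True}" by (intro CollectI exI[of _ "r * s"]) (simp add: mult.assoc)
qed

lemma rprinc: "right_ideal {x * r | r. True}"
  unfolding right_ideal_def
proof (intro conjI ballI allI impI)
  show "0 \<in> {x * r |r. True}" by (rule CollectI, rule exI[of _ 0]) simp
next
  fix a b assume "a \<in> {x * r |r. True}" "b \<in> {x * r |r. True}"
  then obtain r s where "a = x * r" "b = x * s" by blast
  then show "a + b \<in> {x * r |r. True}" by (intro CollectI exI[of _ "r + s"]) (simp add: distrib_left)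
next
  fix a assume "a \<in> {x * r |r. True}"
  then obtain r where "a = x * r" by blast
  then show "- a \<in> {x * r |r. True}" by (intro CollectI exI[of _ "- r"]) simp
next
  fix r a assume "a \<in> {x * r |r. True}"
  then obtain s where "a = x * s" by blast
  then show "a * r \<in> {x * r |r. True}" by (intro CollectI exI[of _ "s * r"]) (simp add: mult.assoc)
qed

definition sumset :: "'a::plus set \<Rightarrow> 'a set \<Rightarrow> 'a set" where
  "sumset A B = {a + b | a b. a \<in> A \<and> b \<in> B}"

definition dcc_in :: "('a set \<Rightarrow> bool) \<Rightarrow> 'a set \<Rightarrow> bool" where
  "dcc_in P B \<longleftrightarrow> (\<forall>W::nat \<Rightarrow> 'a set. (\<forall>j. P (W j) \<and> W j \<subseteq> B) \<and> (\<forall>j. W (Suc j) \<subseteq> W j)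
      \<longrightarrow> (\<exists>N. \<forall>n\<ge>N. W n = W N))"

lemma dcc_zero:
  fixes P :: "'a::zero set \<Rightarrow> bool"
  assumes "\<And>X. P X \<Longrightarrow> 0 \<in> X"
  shows "dcc_in P {0}"
  unfolding dcc_in_def
proof (intro allI impI)
  fix W :: "nat \<Rightarrow> 'a set" assume W: "(\<forall>j. P (W j) \<and> W j \<subseteq> {0}) \<and> (\<forall>j. W (Suc j) \<subseteq> W j)"
  then have "W j = {0}" for j using assms by blast
  then show "\<exists>N. \<forall>n\<ge>N. W n = W N" by simp
qed

lemma dcc_step:
  fixes P :: "'a::ab_group_add set \<Rightarrow> bool"
  assumes int: "\<And>X Y. P X \<Longrightarrow> P Y \<Longrightarrow> P (X \<inter> Y)"
    and sm: "\<And>X Y. P X \<Longrightarrow> P Y \<Longrightarrow> P (sumset X Y)"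
    and grp: "\<And>X. P X \<Longrightarrow> 0 \<in> X \<and> (\<forall>a\<in>X. \<forall>b\<in>X. a + b \<in> X) \<and> (\<forall>a\<in>X. - a \<in> X)"
    and dA: "dcc_in P A" and PA: "P A" and PB: "P B" and AB: "A \<subseteq> B"
    and gap: "\<And>K. P K \<Longrightarrow> A \<subseteq> K \<Longrightarrow> K \<subseteq> B \<Longrightarrow> K = A \<or> K = B"
  shows "dcc_in P B"
  unfolding dcc_in_def
proof (intro allI impI)
  fix W :: "nat \<Rightarrow> 'a set" assume W: "(\<forall>j. P (W j) \<and> W j \<subseteq> B) \<and> (\<forall>j. W (Suc j) \<subseteq> W j)"
  have anti: "m \<le> n \<Longrightarrow> W n \<subseteq> W m" for m n
    using W lift_Suc_antimono_le[of W m n] by blast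
  define V where "V j = W j \<inter> A" for j
  have "(\<forall>j. P (V j) \<and> V j \<subseteq> A) \<and> (\<forall>j. V (Suc j) \<subseteq> V j)"
    unfolding V_def using W int PA by blast
  then obtain N1 where N1: "\<forall>n\<ge>N1. V n = V N1" using dA unfolding dcc_in_def by blast
  define U where "U j = sumset (W j) A" for j
  have UP: "P (U j)" for j unfolding U_def using sm W PA by blast
  have AU: "A \<subseteq> U j" for j
  proof
    fix a assume "a \<in> A"
    moreover have "0 \<in> W j" using grp W by blast
    ultimately have "0 + a \<in> U j" unfolding U_def sumset_def by blast
    then show "a \<in> U j" by simp
  qed
  have UB: "U j \<subseteq> B" for j
  proof
    fix x assume "x \<in> U j"
    then obtain w a where "x = w + a" "w \<in> W j" "a \<in> A" unfolding U_def sumset_def by blast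
    moreover have "w \<in> B" using W \<open>w \<in> W j\<close> by blast
    moreover have "a \<in> B" using AB \<open>a \<in> A\<close> by blast
    ultimately show "x \<in> B" using grp[OF PB] by blast
  qed
  have Ugap: "U j = A \<or> U j = B" for j using gap UP AU UB by blast
  have Uanti: "m \<le> n \<Longrightarrow> U n \<subseteq> U m" for m n
    unfolding U_def sumset_def using anti by blast
  have "\<exists>N2. \<forall>n\<ge>N2. U n = U N2"
  proof (cases "\<exists>j0. U j0 = A")
    case True
    then obtain j0 where j0: "U j0 = A" by blast
    have "U n = U j0" if "n \<ge> j0" for n using Uanti[OF that] AU[of n] j0 by blast
    then show ?thesis by blast
  next
    case False
    then have "U n = B" for n using Ugap by blast
    then show ?thesis by simp
  qed
  then obtain N2 where N2: "\<forall>n\<ge>N2. U n = U N2" by blast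
  define N where "N = max N1 N2"
  have "W n = W N" if nN: "n \<ge> N" for n
  proof
    show "W n \<subseteq> W N" using anti nN by blast
  next
    show "W N \<subseteq> W n"
    proof
      fix x assume xN: "x \<in> W N"
      have "U n = U N2" using spec[OF N2, of n] nN unfolding N_def by simp
      moreover have "U N = U N2" using spec[OF N2, of N] unfolding N_def by simp
      ultimately have UnN: "U n = U N" by simp
      have "x + 0 \<in> U N" unfolding U_def sumset_def using xN grp[of A] PA by blast
      then have "x \<in> U n" using UnN by simp
      then obtain w a where wa: "x = w + a" "w \<in> W n" "a \<in> A" unfolding U_def sumset_def by blast
      have wN: "w \<in> W N" using wa(2) anti nN by blast
      have "x + - w \<in> W N" using grp[of "W N"] W xN wN by blast
      moreover have "x + - w = a" using wa(1) by (simp add: algebra_simps)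
      ultimately have "a \<in> V N" unfolding V_def using wa(3) by simp
      moreover have "V n = V N1" using spec[OF N1, of n] nN unfolding N_def by simp
      moreover have "V N = V N1" using spec[OF N1, of N] unfolding N_def by simp
      ultimately have "a \<in> V n" by simp
      then have "a \<in> W n" unfolding V_def by blast
      then show "x \<in> W n" using grp[of "W n"] W wa(1,2) by blast
    qed
  qed
  then show "\<exists>N. \<forall>n\<ge>N. W n = W N" by blast
qed

lemma left_int: "left_ideal X \<Longrightarrow> left_ideal Y \<Longrightarrow> left_ideal (X \<inter> Y)"
  unfolding left_ideal_def by blast
lemma right_int: "right_ideal X \<Longrightarrow> right_ideal Y \<Longrightarrow> right_ideal (X \<inter> Y)"
  unfolding right_ideal_def by blast

lemma left_sum: assumes X: "left_ideal X" and Y: "left_ideal Y" shows "left_ideal (sumset X Y)"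
  unfolding left_ideal_def
proof (intro conjI ballI allI impI)
  have "0 + 0 \<in> sumset X Y" unfolding sumset_def using X Y unfolding left_ideal_def by blast
  then show "0 \<in> sumset X Y" by simp
next
  fix p q assume "p \<in> sumset X Y" "q \<in> sumset X Y"
  then obtain a b c d where abcd: "p = a + b" "q = c + d" "a \<in> X" "b \<in> Y" "c \<in> X" "d \<in> Y"
    unfolding sumset_def by blast
  have "(a + c) + (b + d) \<in> sumset X Y" unfolding sumset_def using abcd X Y unfolding left_ideal_def by blast
  moreover have "(a + c) + (b + d) = p + q" using abcd by (simp add: algebra_simps)
  ultimately show "p + q \<in> sumset X Y" by simp
next
  fix p assume "p \<in> sumset X Y"
  then obtain a b where ab: "p = a + b" "a \<in> X" "b \<in> Y" unfolding sumset_def by blast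
  have "(- a) + (- b) \<in> sumset X Y" unfolding sumset_def using ab X Y unfolding left_ideal_def by blast
  moreover have "(- a) + (- b) = - p" using ab by (simp add: algebra_simps)
  ultimately show "- p \<in> sumset X Y" by simp
next
  fix r p assume "p \<in> sumset X Y"
  then obtain a b where ab: "p = a + b" "a \<in> X" "b \<in> Y" unfolding sumset_def by blast
  have "r * a + r * b \<in> sumset X Y" unfolding sumset_def using ab X Y unfolding left_ideal_def by blast
  moreover have "r * a + r * b = r * p" using ab by (simp add: algebra_simps)
  ultimately show "r * p \<in> sumset X Y" by simp
qed

lemma right_sum: assumes X: "right_ideal X" and Y: "right_ideal Y" shows "right_ideal (sumset X Y)"
  unfolding right_ideal_def
proof (intro conjI ballI allI impI)
  have "0 + 0 \<in> sumset X Y" unfolding sumset_def using X Y unfolding right_ideal_def by blast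
  then show "0 \<in> sumset X Y" by simp
next
  fix p q assume "p \<in> sumset X Y" "q \<in> sumset X Y"
  then obtain a b c d where abcd: "p = a + b" "q = c + d" "a \<in> X" "b \<in> Y" "c \<in> X" "d \<in> Y"
    unfolding sumset_def by blast
  have "(a + c) + (b + d) \<in> sumset X Y" unfolding sumset_def using abcd X Y unfolding right_ideal_def by blast
  moreover have "(a + c) + (b + d) = p + q" using abcd by (simp add: algebra_simps)
  ultimately show "p + q \<in> sumset X Y" by simp
next
  fix p assume "p \<in> sumset X Y"
  then obtain a b where ab: "p = a + b" "a \<in> X" "b \<in> Y" unfolding sumset_def by blast
  have "(- a) + (- b) \<in> sumset X Y" unfolding sumset_def using ab X Y unfolding right_ideal_def by blast
  moreover have "(- a) + (- b) = - p" using ab by (simp add: algebra_simps)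
  ultimately show "- p \<in> sumset X Y" by simp
next
  fix r p assume "p \<in> sumset X Y"
  then obtain a b where ab: "p = a + b" "a \<in> X" "b \<in> Y" unfolding sumset_def by blast
  have "a * r + b * r \<in> sumset X Y" unfolding sumset_def using ab X Y unfolding right_ideal_def by blast
  moreover have "a * r + b * r = p * r" using ab by (simp add: algebra_simps)
  ultimately show "p * r \<in> sumset X Y" by simp
qed

lemma left_grp: "left_ideal X \<Longrightarrow> 0 \<in> X \<and> (\<forall>a\<in>X. \<forall>b\<in>X. a + b \<in> X) \<and> (\<forall>a\<in>X. - a \<in> X)"
  unfolding left_ideal_def by blast
lemma right_grp: "right_ideal X \<Longrightarrow> 0 \<in> X \<and> (\<forall>a\<in>X. \<forall>b\<in>X. a + b \<in> X) \<and> (\<forall>a\<in>X. - a \<in> X)"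
  unfolding right_ideal_def by blast

locale lr =
  fixes M :: "'a::ring_1 set"
  assumes maxM: "maximal_left_ideal M"
    and uniq: "\<And>N. maximal_left_ideal N \<Longrightarrow> N = M"
    and lnoeth: "left_noetherian TYPE('a)"
    and rnoeth: "right_noetherian TYPE('a)"
    and hyp: "\<forall>N::('a \<times> 'a) set. left_submodule2 N \<longrightarrow> quot2_dsum_cyclic N"
begin

lemma M_li: "left_ideal M" using maxM by (simp add: maximal_left_ideal_def)
lemma M_ne: "M \<noteq> UNIV" using maxM by (simp add: maximal_left_ideal_def)
lemma M0: "0 \<in> M" using M_li by (simp add: left_ideal_def)
lemma M_add: "a \<in> M \<Longrightarrow> b \<in> M \<Longrightarrow> a + b \<in> M" using M_li by (simp add: left_ideal_def)
lemma M_neg: "a \<in> M \<Longrightarrow> - a \<in> M" using M_li by (simp add: left_ideal_def)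
lemma M_lmult: "a \<in> M \<Longrightarrow> r * a \<in> M" using M_li by (simp add: left_ideal_def)
lemma M_diff: "a \<in> M \<Longrightarrow> b \<in> M \<Longrightarrow> a - b \<in> M" using M_add[OF _ M_neg, of a b] by simp
lemma one_notin: "1 \<notin> M"
proof
  assume "1 \<in> M"
  then have "r \<in> M" for r using M_lmult[of 1 r] by simp
  then show False using M_ne by auto
qed

lemma left_acc: "\<forall>I::nat \<Rightarrow> 'a set. (\<forall>n. left_ideal (I n)) \<and> (\<forall>n. I n \<subseteq> I (Suc n)) \<longrightarrow> (\<exists>N. \<forall>n\<ge>N. I n = I N)"
  using lnoeth by (simp add: left_noetherian_def)
lemma right_acc: "\<forall>I::nat \<Rightarrow> 'a set. (\<forall>n. right_ideal (I n)) \<and> (\<forall>n. I n \<subseteq> I (Suc n)) \<longrightarrow> (\<exists>N. \<forall>n\<ge>N. I n = I N)"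
  using rnoeth by (simp add: right_noetherian_def)

lemma contained:
  assumes "left_ideal I" "I \<noteq> UNIV"
  shows "I \<subseteq> M"
proof -
  have "\<exists>X. left_ideal X \<and> (I \<subseteq> X \<and> X \<noteq> UNIV) \<and> maximal_left_ideal X"
  proof (rule acc_reach[OF left_acc])
    show "left_ideal I" "I \<subseteq> I \<and> I \<noteq> UNIV" using assms by auto
  next
    fix X assume X: "left_ideal X" "I \<subseteq> X \<and> X \<noteq> UNIV" "\<not> maximal_left_ideal X"
    then obtain J where "left_ideal J" "X \<subseteq> J" "J \<noteq> UNIV" "J \<noteq> X"
      unfolding maximal_left_ideal_def by blast
    then show "\<exists>Y. left_ideal Y \<and> (I \<subseteq> Y \<and> Y \<noteq> UNIV) \<and> X \<subset> Y" using X by blast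
  qed
  then obtain X where "I \<subseteq> X" "maximal_left_ideal X" by blast
  then show ?thesis using uniq by blast
qed

lemma left_inv: assumes "x \<notin> M" shows "\<exists>y. y * x = 1"
proof (rule ccontr)
  assume nx: "\<not> ?thesis"
  let ?I = "{r * x | r. True}"
  have li: "left_ideal ?I" by (rule lprinc)
  have "1 \<notin> ?I" using nx by auto
  then have "?I \<noteq> UNIV" by (metis UNIV_I)
  then have "?I \<subseteq> M" using contained li by blast
  moreover have "x \<in> ?I" by (rule CollectI, rule exI[of _ 1]) simp
  ultimately show False using assms by auto
qed

lemma unit: assumes "x \<notin> M" shows "\<exists>y. y * x = 1 \<and> x * y = 1"
proof -
  obtain y where yx: "y * x = 1" using left_inv assms by blast
  define e where "e = x * y"
  have ee: "e * e = e" unfolding e_def by (metis mult.assoc mult_1 yx)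
  have "e \<notin> M \<or> 1 - e \<notin> M"
  proof (rule ccontr)
    assume "\<not> ?thesis"
    then have "e + (1 - e) \<in> M" using M_add by blast
    then show False using one_notin by simp
  qed
  then have "e = 1"
  proof
    assume "e \<notin> M"
    then obtain r where "r * e = 1" using left_inv by blast
    then have "e = r * e * e" by simp
    also have "\<dots> = r * (e * e)" by (simp add: mult.assoc)
    also have "\<dots> = 1" using ee \<open>r * e = 1\<close> by simp
    finally show ?thesis .
  next
    assume "1 - e \<notin> M"
    then obtain r where r: "r * (1 - e) = 1" using left_inv by blast
    then have "e = r * (1 - e) * e" by simp
    also have "\<dots> = 0" using ee by (simp add: mult.assoc algebra_simps)
    finally have "x * y = 0" unfolding e_def .
    then have "y * (x * y) = 0" by simp
    then have "(y * x) * y = 0" by (simp add: mult.assoc)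
    then have "y = 0" using yx by simp
    then show ?thesis using yx by simp
  qed
  then have "x * y = 1" using e_def by simp
  then show ?thesis using yx by blast
qed

lemma not_rinv: assumes "a \<in> M" shows "a * z \<noteq> 1"
proof
  assume az: "a * z = 1"
  have "z \<notin> M"
  proof
    assume "z \<in> M" then have "a * z \<in> M" by (rule M_lmult)
    then show False using az one_notin by simp
  qed
  then obtain w where w: "w * z = 1" "z * w = 1" using unit by blast
  have "a = a * (z * w)" using w by simp
  also have "\<dots> = w" using az by (simp add: mult.assoc[symmetric])
  finally have "a = w" .
  then have "z * a = 1" using w by simp
  then have "z * a \<in> M" using M_lmult assms by blast
  then show False using \<open>z * a = 1\<close> one_notin by simp
qed

lemma M_rmult: assumes "a \<in> M" shows "a * r \<in> M"
proof (rule ccontr)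
  assume "a * r \<notin> M"
  then obtain v where "v * (a * r) = 1 \<and> (a * r) * v = 1" using unit by blast
  then have "a * (r * v) = 1" by (simp add: mult.assoc)
  then show False using not_rinv assms by blast
qed

lemma one_minus: assumes "m \<in> M" shows "1 - m \<notin> M"
proof
  assume "1 - m \<in> M"
  then have "(1 - m) + m \<in> M" using M_add assms by blast
  then show False using one_notin by simp
qed

lemma cancel_l: assumes "u \<notin> M" "u * x = 0" shows "x = 0"
proof -
  obtain y where y: "y * u = 1" using unit assms(1) by blast
  have "x = (y * u) * x" using y by simp
  also have "\<dots> = y * (u * x)" by (simp add: mult.assoc)
  finally show ?thesis using assms(2) by simp
qed
lemma cancel_r: assumes "u \<notin> M" "x * u = 0" shows "x = 0"
proof -
  obtain y where y: "u * y = 1" using unit assms(1) by blast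
  have "x = x * (u * y)" using y by simp
  also have "\<dots> = (x * u) * y" by (simp add: mult.assoc)
  finally show ?thesis using assms(2) by simp
qed

lemma sum_M: "finite S \<Longrightarrow> (\<And>s. s \<in> S \<Longrightarrow> f s \<in> M) \<Longrightarrow> sum f S \<in> M"
proof (induction S rule: finite_induct)
  case empty then show ?case using M0 by simp
next
  case (insert x F) then show ?case using M_add by simp
qed


lemma chain_main:
  assumes xM: "x \<in> M" and yM: "y \<in> M" and nz: "x \<noteq> 0 \<or> y \<noteq> 0"
  shows "(\<exists>r. x = y * r) \<or> (\<exists>r. y = x * r)"
proof -
  define N where "N = {(r * x, r * y) | r. True}"
  have memN: "(p, q) \<in> N \<longleftrightarrow> (\<exists>r. p = r * x \<and> q = r * y)" for p q by (simp add: N_def)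
  have sub: "left_submodule2 N" unfolding left_submodule2_def
  proof (intro conjI ballI allI impI)
    show "(0, 0) \<in> N" unfolding memN by (intro exI[of _ 0]) simp
  next
    fix u v assume "u \<in> N" "v \<in> N"
    then obtain r s where "u = (r * x, r * y)" "v = (s * x, s * y)" unfolding N_def by blast
    then show "(fst u + fst v, snd u + snd v) \<in> N" unfolding memN
      by (intro exI[of _ "r + s"]) (simp add: distrib_right)
  next
    fix u assume "u \<in> N"
    then obtain r where "u = (r * x, r * y)" unfolding N_def by blast
    then show "(- fst u, - snd u) \<in> N" unfolding memN by (intro exI[of _ "- r"]) simp
  next
    fix r u assume "u \<in> N"
    then obtain s where "u = (s * x, s * y)" unfolding N_def by blast
    then show "(r * fst u, r * snd u) \<in> N" unfolding memN by (intro exI[of _ "r * s"]) (simp add: mult.assoc)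
  qed
  then have "quot2_dsum_cyclic N" using hyp by blast
  then obtain S where fin: "finite S"
    and gen: "\<forall>v. \<exists>c. (fst v - fst (lin2 S c), snd v - snd (lin2 S c)) \<in> N"
    and ind: "\<forall>c. lin2 S c \<in> N \<longrightarrow> (\<forall>s\<in>S. (c s * fst s, c s * snd s) \<in> N)"
    unfolding quot2_dsum_cyclic_def by blast
  have fl: "fst (lin2 S c) = (\<Sum>s\<in>S. c s * fst s)" for c by (simp add: lin2_def)
  have sl: "snd (lin2 S c) = (\<Sum>s\<in>S. c s * snd s)" for c by (simp add: lin2_def)
  have lc: "(\<Sum>s\<in>S. (p * f s + q * g s) * h s) = p * (\<Sum>s\<in>S. f s * h s) + q * (\<Sum>s\<in>S. g s * h s)"
    for p q :: 'a and f g h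
    by (simp add: distrib_right mult.assoc sum.distrib sum_distrib_left)
  obtain a where "(fst (1::'a,0::'a) - fst (lin2 S a), snd (1::'a,0::'a) - snd (lin2 S a)) \<in> N" using gen by blast
  then obtain r1 where A1: "1 - (\<Sum>s\<in>S. a s * fst s) = r1 * x" and A2: "0 - (\<Sum>s\<in>S. a s * snd s) = r1 * y"
    unfolding memN fl sl by auto
  obtain b where "(fst (0::'a,1::'a) - fst (lin2 S b), snd (0::'a,1::'a) - snd (lin2 S b)) \<in> N" using gen by blast
  then obtain r2 where B1: "0 - (\<Sum>s\<in>S. b s * fst s) = r2 * x" and B2: "1 - (\<Sum>s\<in>S. b s * snd s) = r2 * y"
    unfolding memN fl sl by auto
  have A1': "(\<Sum>s\<in>S. a s * fst s) = 1 - r1 * x" using A1 by (simp add: algebra_simps)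
  have A2': "(\<Sum>s\<in>S. a s * snd s) = - (r1 * y)"
  proof -
    have "- (\<Sum>s\<in>S. a s * snd s) = r1 * y" using A2 by simp
    then have "- (- (\<Sum>s\<in>S. a s * snd s)) = - (r1 * y)" by (rule arg_cong)
    then show ?thesis by simp
  qed
  have B1': "(\<Sum>s\<in>S. b s * fst s) = - (r2 * x)"
  proof -
    have "- (\<Sum>s\<in>S. b s * fst s) = r2 * x" using B1 by simp
    then have "- (- (\<Sum>s\<in>S. b s * fst s)) = - (r2 * x)" by (rule arg_cong)
    then show ?thesis by simp
  qed
  have B2': "(\<Sum>s\<in>S. b s * snd s) = 1 - r2 * y" using B2 by (simp add: algebra_simps)
  define k where "k = x * r1 + y * r2"
  have kM: "k \<in> M" unfolding k_def using M_add M_rmult xM yM by blast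
  define c where "c s = x * a s + y * b s" for s
  have c1: "(\<Sum>s\<in>S. c s * fst s) = (1 - k) * x"
    unfolding c_def lc A1' B1' k_def by (simp add: algebra_simps)
  have c2: "(\<Sum>s\<in>S. c s * snd s) = (1 - k) * y"
    unfolding c_def lc A2' B2' k_def by (simp add: algebra_simps)
  have "lin2 S c \<in> N" unfolding lin2_def memN c1 c2 by blast
  then have "\<forall>s\<in>S. (c s * fst s, c s * snd s) \<in> N" using ind by blast
  then have "\<forall>s\<in>S. \<exists>t. c s * fst s = t * x \<and> c s * snd s = t * y" unfolding memN by blast
  from bchoice[OF this] obtain T where T: "\<forall>s\<in>S. c s * fst s = T s * x \<and> c s * snd s = T s * y" by blast
  have "(\<Sum>s\<in>S. T s) * x = (1 - k) * x"
    unfolding c1[symmetric] sum_distrib_right using T by simp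
  then have ex: "(1 - k - (\<Sum>s\<in>S. T s)) * x = 0" by (simp add: algebra_simps)
  have "(\<Sum>s\<in>S. T s) * y = (1 - k) * y"
    unfolding c2[symmetric] sum_distrib_right using T by simp
  then have ey: "(1 - k - (\<Sum>s\<in>S. T s)) * y = 0" by (simp add: algebra_simps)
  have uM: "1 - k - (\<Sum>s\<in>S. T s) \<in> M"
  proof (rule ccontr)
    assume "1 - k - (\<Sum>s\<in>S. T s) \<notin> M"
    then have "x = 0" "y = 0" using cancel_l ex ey by blast+
    then show False using nz by simp
  qed
  have "(\<Sum>s\<in>S. T s) \<notin> M"
  proof
    assume "(\<Sum>s\<in>S. T s) \<in> M"
    then have "(1 - k - (\<Sum>s\<in>S. T s)) + k + (\<Sum>s\<in>S. T s) \<in> M" using M_add uM kM by blast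
    then show False using one_notin by simp
  qed
  then obtain s0 where s0S: "s0 \<in> S" and Ts0: "T s0 \<notin> M" using sum_M[OF fin, of T] by blast
  obtain w where w: "w * T s0 = 1" using unit Ts0 by blast
  define f where "f = w * c s0"
  have fM: "f \<in> M" unfolding f_def c_def using M_lmult M_add M_rmult xM yM by blast
  have xf: "x = f * fst s0"
  proof -
    have "f * fst s0 = w * (c s0 * fst s0)" unfolding f_def by (simp add: mult.assoc)
    also have "\<dots> = (w * T s0) * x" using T s0S by (simp add: mult.assoc)
    finally show ?thesis using w by simp
  qed
  have yf: "y = f * snd s0"
  proof -
    have "f * snd s0 = w * (c s0 * snd s0)" unfolding f_def by (simp add: mult.assoc)
    also have "\<dots> = (w * T s0) * y" using T s0S by (simp add: mult.assoc)
    finally show ?thesis using w by simp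
  qed
  show ?thesis
  proof (cases "fst s0 \<in> M")
    case False
    then obtain p where p: "fst s0 * p = 1" using unit by blast
    have "x * p = f" using xf p by (simp add: mult.assoc)
    then have "y = x * (p * snd s0)" using yf by (simp add: mult.assoc[symmetric])
    then show ?thesis by blast
  next
    case s1M: True
    show ?thesis
    proof (cases "snd s0 \<in> M")
      case False
      then obtain p where p: "snd s0 * p = 1" using unit by blast
      have "y * p = f" using yf p by (simp add: mult.assoc)
      then have "x = y * (p * fst s0)" using xf by (simp add: mult.assoc[symmetric])
      then show ?thesis by blast
    next
      case s2M: True
      define s1 where "s1 = fst s0"
      define s2 where "s2 = snd s0"
      define e where "e s = (if s = s0 then (1::'a) else 0)" for s
      have esum: "(\<Sum>s\<in>S. e s * h s) = h s0" for h
      proof -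
        have "(\<Sum>s\<in>S. e s * h s) = (\<Sum>s\<in>S. if s = s0 then h s else 0)"
          by (rule sum.cong) (simp_all add: e_def)
        also have "\<dots> = h s0" using fin s0S by simp
        finally show ?thesis .
      qed
      define d where "d s = s1 * a s + s2 * b s - e s" for s
      have dsum: "(\<Sum>s\<in>S. d s * h s) = s1 * (\<Sum>s\<in>S. a s * h s) + s2 * (\<Sum>s\<in>S. b s * h s) - h s0" for h
      proof -
        have "(\<Sum>s\<in>S. d s * h s) = (\<Sum>s\<in>S. (s1 * a s + s2 * b s) * h s) - (\<Sum>s\<in>S. e s * h s)"
          unfolding d_def left_diff_distrib sum_subtractf by simp
        then show ?thesis unfolding lc esum .
      qed
      have d1: "(\<Sum>s\<in>S. d s * fst s) = (- (s1 * r1 + s2 * r2)) * x"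
        unfolding dsum A1' B1' s1_def by (simp add: algebra_simps)
      have d2: "(\<Sum>s\<in>S. d s * snd s) = (- (s1 * r1 + s2 * r2)) * y"
        unfolding dsum A2' B2' s2_def by (simp add: algebra_simps)
      have "lin2 S d \<in> N" unfolding lin2_def memN d1 d2 by blast
      then have "(d s0 * fst s0, d s0 * snd s0) \<in> N" using ind s0S by blast
      then obtain g where g1: "d s0 * s1 = g * x" and g2: "d s0 * s2 = g * y"
        unfolding memN s1_def s2_def by blast
      define m where "m = s1 * a s0 + s2 * b s0"
      have mM: "m \<in> M" unfolding m_def using M_add M_rmult s1M s2M s1_def s2_def by blast
      have dm: "d s0 = m - 1" unfolding d_def m_def e_def by simp
      have "d s0 \<notin> M"
      proof
        assume "d s0 \<in> M"
        then have "m - d s0 \<in> M" using M_diff mM by blast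
        then show False using dm one_notin by simp
      qed
      then obtain v where v: "v * d s0 = 1" using unit by blast
      have s1x: "s1 = v * g * x"
      proof -
        have "s1 = (v * d s0) * s1" using v by simp
        also have "\<dots> = v * (d s0 * s1)" by (simp add: mult.assoc)
        finally show ?thesis using g1 by (simp add: mult.assoc)
      qed
      have s2y: "s2 = v * g * y"
      proof -
        have "s2 = (v * d s0) * s2" using v by simp
        also have "\<dots> = v * (d s0 * s2)" by (simp add: mult.assoc)
        finally show ?thesis using g2 by (simp add: mult.assoc)
      qed
      have fvg: "f * (v * g) \<in> M" using M_rmult fM by blast
      have "(1 - f * (v * g)) * x = 0"
      proof -
        have "x = f * (v * g) * x" using xf s1x s1_def by (simp add: mult.assoc)
        then show ?thesis by (simp add: algebra_simps)
      qed
      then have "x = 0" using cancel_l one_minus fvg by blast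
      have "(1 - f * (v * g)) * y = 0"
      proof -
        have "y = f * (v * g) * y" using yf s2y s2_def by (simp add: mult.assoc)
        then show ?thesis by (simp add: algebra_simps)
      qed
      then have "y = 0" using cancel_l one_minus fvg by blast
      then show ?thesis using \<open>x = 0\<close> nz by simp
    qed
  qed
qed


lemma chainA: fixes x y :: 'a shows "(\<exists>r. x = y * r) \<or> (\<exists>r. y = x * r)"
proof (cases "x \<in> M")
  case False
  then obtain p where "x * p = 1" using unit by blast
  then have "y = x * (p * y)" by (simp add: mult.assoc[symmetric])
  then show ?thesis by blast
next
  case xM: True
  show ?thesis
  proof (cases "y \<in> M")
    case False
    then obtain p where "y * p = 1" using unit by blast
    then have "x = y * (p * x)" by (simp add: mult.assoc[symmetric])
    then show ?thesis by blast
  next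
    case yM: True
    show ?thesis
    proof (cases "x = 0 \<and> y = 0")
      case True
      then have "x = y * 0" by simp
      then show ?thesis by blast
    next
      case False
      then show ?thesis using chain_main xM yM by blast
    qed
  qed
qed

lemma RP_right: "right_ideal (RP a)" unfolding RP_def by (rule rprinc)
lemma LP_left: "left_ideal (LP a)" unfolding LP_def by (rule lprinc)

lemma right_ideal_principal:
  fixes I :: "'a set"
  assumes I: "right_ideal I"
  shows "\<exists>a. I = RP a"
proof -
  have "\<exists>X. right_ideal X \<and> (X \<subseteq> I \<and> (\<exists>a. X = RP a)) \<and> X = I"
  proof (rule acc_reach[OF right_acc, where A = "RP 0" and Q = "\<lambda>X. X \<subseteq> I \<and> (\<exists>a. X = RP a)" and G = "\<lambda>X. X = I"])
    show "right_ideal (RP 0)" by (rule RP_right)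
    have "0 \<in> I" using I by (simp add: right_ideal_def)
    then show "RP 0 \<subseteq> I \<and> (\<exists>a. RP 0 = RP a)" by (auto simp: RP_iff)
  next
    fix X assume X: "right_ideal X" "X \<subseteq> I \<and> (\<exists>a. X = RP a)" "X \<noteq> I"
    then obtain a where a: "X = RP a" by blast
    obtain z where z: "z \<in> I" "z \<notin> X" using X by blast
    have zsub: "RP z \<subseteq> I" using z(1) I by (auto simp: RP_iff right_ideal_def)
    have "a \<notin> RP z \<longrightarrow> z \<in> RP a" using chainA[of a z] by (auto simp: RP_iff)
    moreover have "z \<notin> RP a" using z a by simp
    ultimately have "a \<in> RP z" by blast
    then obtain r where ar: "a = z * r" by (auto simp: RP_iff)
    have "X \<subseteq> RP z" unfolding a by (auto simp: RP_iff ar mult.assoc)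
    moreover have "z \<in> RP z" unfolding RP_iff by (intro exI[of _ 1]) simp
    ultimately have "X \<subset> RP z" using z by blast
    then show "\<exists>Y. right_ideal Y \<and> (Y \<subseteq> I \<and> (\<exists>a. Y = RP a)) \<and> X \<subset> Y"
      using RP_right zsub by blast
  qed
  then show ?thesis by blast
qed

lemma M_right: "right_ideal M"
  unfolding right_ideal_def using M0 M_add M_neg M_rmult by blast

definition tt where "tt = (SOME t. M = RP t)"
lemma M_eq: "M = RP tt"
  unfolding tt_def using right_ideal_principal[OF M_right] by (rule someI_ex)

lemma M_iff: "m \<in> M \<longleftrightarrow> (\<exists>r. m = tt * r)"
proof -
  have "m \<in> M \<longleftrightarrow> m \<in> RP tt" by (subst M_eq) (rule refl)
  then show ?thesis by (simp only: RP_iff)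
qed

lemma tt_M: "tt \<in> M" unfolding M_iff by (intro exI[of _ 1]) simp

lemma comm1: "\<exists>r'. r * tt = tt * r'"
proof -
  have "r * tt \<in> M" using tt_M M_lmult by blast
  then show ?thesis unfolding M_iff .
qed

lemma commk: "\<exists>r'. r * tt ^ k = tt ^ k * r'"
proof (induction k arbitrary: r)
  case 0 then show ?case by (intro exI[of _ r]) simp
next
  case (Suc k)
  obtain r1 where r1: "r * tt ^ k = tt ^ k * r1" using Suc by blast
  obtain r2 where r2: "r1 * tt = tt * r2" using comm1 by blast
  have "r * tt ^ Suc k = (r * tt ^ k) * tt" by (simp only: power_Suc2 mult.assoc)
  also have "\<dots> = tt ^ k * (r1 * tt)" using r1 by (simp add: mult.assoc)
  also have "\<dots> = tt ^ Suc k * r2" using r2 by (simp only: power_Suc2 mult.assoc)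
  finally show ?case by blast
qed

lemma RPk_left: "left_ideal (RP (tt ^ k))"
proof -
  have "right_ideal (RP (tt ^ k))" by (rule RP_right)
  moreover have "r * x \<in> RP (tt ^ k)" if xin: "x \<in> RP (tt ^ k)" for r x
  proof -
    obtain s where s: "x = tt ^ k * s" using xin unfolding RP_iff by blast
    obtain r' where r': "r * tt ^ k = tt ^ k * r'" using commk by blast
    have "r * x = tt ^ k * (r' * s)" using s r' by (simp add: mult.assoc[symmetric])
    then show ?thesis unfolding RP_iff by blast
  qed
  ultimately show ?thesis unfolding left_ideal_def right_ideal_def by blast
qed

lemma RP0: "RP (tt ^ 0) = UNIV" by (auto simp: RP_iff)

lemma RP_Suc_sub: "RP (tt ^ Suc k) \<subseteq> RP (tt ^ k)"
proof
  fix x assume "x \<in> RP (tt ^ Suc k)"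
  then obtain r where "x = tt ^ Suc k * r" unfolding RP_iff by blast
  then have "x = tt ^ k * (tt * r)" by (simp only: power_Suc2 mult.assoc)
  then show "x \<in> RP (tt ^ k)" unfolding RP_iff by blast
qed

lemma M_times_RPk: assumes "m \<in> M" "x \<in> RP (tt ^ k)" shows "m * x \<in> RP (tt ^ Suc k)"
proof -
  obtain s where s: "m = tt * s" using assms(1) by (auto simp: M_iff)
  obtain y where y: "x = tt ^ k * y" using assms(2) by (auto simp: RP_iff)
  obtain s' where s': "s * tt ^ k = tt ^ k * s'" using commk by blast
  have "m * x = tt * (s * tt ^ k) * y" using s y by (simp add: mult.assoc)
  also have "\<dots> = tt ^ Suc k * (s' * y)" using s' by (simp add: mult.assoc)
  finally show ?thesis unfolding RP_iff by blast
qed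

lemma val_step: assumes "x \<in> RP (tt ^ k)" "x \<notin> RP (tt ^ Suc k)"
  shows "\<exists>u. u \<notin> M \<and> x = tt ^ k * u"
proof -
  obtain u where u: "x = tt ^ k * u" using assms(1) by (auto simp: RP_iff)
  have "u \<notin> M"
  proof
    assume "u \<in> M"
    then obtain v where "u = tt * v" by (auto simp: M_iff)
    then have "x = tt ^ Suc k * v" using u by (simp only: power_Suc2 mult.assoc)
    then show False using assms(2) by (auto simp: RP_iff)
  qed
  then show ?thesis using u by blast
qed

lemma val_exists: assumes "x \<notin> RP (tt ^ m)"
  shows "\<exists>k u. k < m \<and> u \<notin> M \<and> x = tt ^ k * u"
proof -
  define n where "n = (LEAST n. x \<notin> RP (tt ^ n))"
  have xn: "x \<notin> RP (tt ^ n)" unfolding n_def by (rule LeastI[of _ m]) (rule assms)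
  have nm: "n \<le> m" unfolding n_def by (rule Least_le) (rule assms)
  have "n \<noteq> 0"
  proof
    assume n0: "n = 0"
    have "x \<in> RP (tt ^ n)" unfolding n0 RP0 by (rule UNIV_I)
    then show False using xn by blast
  qed
  then obtain k where k: "n = Suc k" by (cases n) auto
  have "x \<in> RP (tt ^ k)"
  proof (rule ccontr)
    assume "x \<notin> RP (tt ^ k)"
    then have "n \<le> k" unfolding n_def by (rule Least_le)
    then show False using k by simp
  qed
  then obtain u where "u \<notin> M" "x = tt ^ k * u" using val_step xn k by blast
  then show ?thesis using k nm by (intro exI[of _ k] exI[of _ u]) simp
qed

lemma gap_right:
  assumes K: "right_ideal K" "RP (tt ^ Suc k) \<subseteq> K" "K \<subseteq> RP (tt ^ k)"
  shows "K = RP (tt ^ Suc k) \<or> K = RP (tt ^ k)"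
proof (cases "K = RP (tt ^ Suc k)")
  case True then show ?thesis by blast
next
  case False
  then obtain x where x: "x \<in> K" "x \<notin> RP (tt ^ Suc k)" using K by blast
  then obtain u where u: "u \<notin> M" "x = tt ^ k * u" using val_step K(3) by blast
  obtain v where v: "u * v = 1" using unit u(1) by blast
  have xv: "x * v = tt ^ k" using u v by (simp add: mult.assoc)
  have "x * v \<in> K" using K(1) x(1) unfolding right_ideal_def by blast
  then have tk: "tt ^ k \<in> K" using xv by simp
  have "RP (tt ^ k) \<subseteq> K"
  proof
    fix y assume "y \<in> RP (tt ^ k)"
    then obtain r where "y = tt ^ k * r" unfolding RP_iff by blast
    moreover have "tt ^ k * r \<in> K" using K(1) tk unfolding right_ideal_def by blast
    ultimately show "y \<in> K" by simp
  qed
  then show ?thesis using K by blast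
qed


lemma gap_left:
  assumes L: "left_ideal L" "RP (tt ^ Suc k) \<subseteq> L" and g: "g \<in> RP (tt ^ k)"
    and K: "left_ideal K" "L \<subseteq> K" "K \<subseteq> sumset L (LP g)"
  shows "K = L \<or> K = sumset L (LP g)"
proof (cases "K = L")
  case True then show ?thesis by blast
next
  case False
  then obtain x where x: "x \<in> K" "x \<notin> L" using K by blast
  then obtain l y where ly: "x = l + y" "l \<in> L" "y \<in> LP g" using K(3) unfolding sumset_def by blast
  then obtain r where r: "y = r * g" unfolding LP_iff by blast
  have "r \<notin> M"
  proof
    assume "r \<in> M"
    then have "r * g \<in> RP (tt ^ Suc k)" using M_times_RPk g by blast
    then have "y \<in> L" using r L(2) by blast
    then have "x \<in> L" using ly L(1) unfolding left_ideal_def by blast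
    then show False using x by blast
  qed
  then obtain v where v: "v * r = 1" using unit by blast
  have lK: "l \<in> K" using ly K(2) by blast
  have "x + - l \<in> K" using x lK K(1) unfolding left_ideal_def by blast
  moreover have "x + - l = y" using ly by (simp add: algebra_simps)
  ultimately have "y \<in> K" by simp
  then have "v * y \<in> K" using K(1) unfolding left_ideal_def by blast
  moreover have "v * y = g" using r v by (simp add: mult.assoc[symmetric])
  ultimately have gK: "g \<in> K" by simp
  have "sumset L (LP g) \<subseteq> K"
  proof
    fix z assume "z \<in> sumset L (LP g)"
    then obtain a b where ab: "z = a + b" "a \<in> L" "b \<in> LP g" unfolding sumset_def by blast
    then obtain s where "b = s * g" unfolding LP_iff by blast
    then have "b \<in> K" using gK K(1) unfolding left_ideal_def by blast
    moreover have "a \<in> K" using ab K(2) by blast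
    ultimately show "z \<in> K" using ab(1) K(1) unfolding left_ideal_def by blast
  qed
  then show ?thesis using K by blast
qed

lemma RP_zero: "RP (0::'a) = {0}" by (auto simp: RP_iff)

lemma dcc_right:
  assumes nil: "tt ^ n = 0" and kd: "k + d = n"
  shows "dcc_in right_ideal (RP (tt ^ k))"
  using kd
proof (induction d arbitrary: k)
  case 0
  then have "RP (tt ^ k) = {0}" using nil RP_zero by simp
  moreover have "dcc_in right_ideal ({0}::'a set)" by (rule dcc_zero) (simp add: right_ideal_def)
  ultimately show ?case by simp
next
  case (Suc d)
  then have IH: "dcc_in right_ideal (RP (tt ^ Suc k))" using Suc.IH[of "Suc k"] by (simp del: power_Suc)
  show ?case
  proof (rule dcc_step[OF right_int right_sum right_grp IH RP_right RP_right RP_Suc_sub])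
    fix K assume "right_ideal K" "RP (tt ^ Suc k) \<subseteq> K" "K \<subseteq> RP (tt ^ k)"
    then show "K = RP (tt ^ Suc k) \<or> K = RP (tt ^ k)" by (rule gap_right)
  qed
qed

lemma dcc_left:
  assumes nil: "tt ^ n = 0" and kd: "k + d = n"
  shows "dcc_in left_ideal (RP (tt ^ k))"
  using kd
proof (induction d arbitrary: k)
  case 0
  then have "RP (tt ^ k) = {0}" using nil RP_zero by simp
  moreover have "dcc_in left_ideal ({0}::'a set)" by (rule dcc_zero) (simp add: left_ideal_def)
  ultimately show ?case by simp
next
  case (Suc d)
  then have IH: "dcc_in left_ideal (RP (tt ^ Suc k))" using Suc.IH[of "Suc k"] by (simp del: power_Suc)
  have "\<exists>X. left_ideal X \<and> (RP (tt ^ Suc k) \<subseteq> X \<and> X \<subseteq> RP (tt ^ k) \<and> dcc_in left_ideal X) \<and> X = RP (tt ^ k)"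
  proof (rule acc_reach[OF left_acc, where A = "RP (tt ^ Suc k)"
        and Q = "\<lambda>X. RP (tt ^ Suc k) \<subseteq> X \<and> X \<subseteq> RP (tt ^ k) \<and> dcc_in left_ideal X"
        and G = "\<lambda>X. X = RP (tt ^ k)"])
    show "left_ideal (RP (tt ^ Suc k))" by (rule RPk_left)
    show "RP (tt ^ Suc k) \<subseteq> RP (tt ^ Suc k) \<and> RP (tt ^ Suc k) \<subseteq> RP (tt ^ k) \<and> dcc_in left_ideal (RP (tt ^ Suc k))"
      using IH RP_Suc_sub by blast
  next
    fix X assume X: "left_ideal X" "RP (tt ^ Suc k) \<subseteq> X \<and> X \<subseteq> RP (tt ^ k) \<and> dcc_in left_ideal X"
      "X \<noteq> RP (tt ^ k)"
    then obtain g where g: "g \<in> RP (tt ^ k)" "g \<notin> X" by blast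
    define Y where "Y = sumset X (LP g)"
    have PY: "left_ideal Y" unfolding Y_def by (rule left_sum[OF X(1) LP_left])
    have XY: "X \<subseteq> Y"
    proof
      fix x assume "x \<in> X"
      moreover have "0 \<in> LP g" unfolding LP_iff by (intro exI[of _ 0]) simp
      ultimately have "x + 0 \<in> Y" unfolding Y_def sumset_def by blast
      then show "x \<in> Y" by simp
    qed
    have gY: "g \<in> Y"
    proof -
      have "0 \<in> X" using X(1) unfolding left_ideal_def by blast
      moreover have "g \<in> LP g" unfolding LP_iff by (intro exI[of _ 1]) simp
      ultimately have "0 + g \<in> Y" unfolding Y_def sumset_def by blast
      then show ?thesis by simp
    qed
    have Ysub: "Y \<subseteq> RP (tt ^ k)"
    proof
      fix z assume "z \<in> Y"
      then obtain a b where ab: "z = a + b" "a \<in> X" "b \<in> LP g" unfolding Y_def sumset_def by blast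
      then obtain s where "b = s * g" unfolding LP_iff by blast
      then have "b \<in> RP (tt ^ k)" using g(1) RPk_left[of k] unfolding left_ideal_def by blast
      moreover have "a \<in> RP (tt ^ k)" using ab X(2) by blast
      ultimately show "z \<in> RP (tt ^ k)" using ab(1) RPk_left[of k] unfolding left_ideal_def by blast
    qed
    have dY: "dcc_in left_ideal Y"
    proof (rule dcc_step[OF left_int left_sum left_grp _ X(1) PY XY])
      show "dcc_in left_ideal X" using X(2) by blast
    next
      fix K assume "left_ideal K" "X \<subseteq> K" "K \<subseteq> Y"
      then show "K = X \<or> K = Y" unfolding Y_def using gap_left[OF X(1) _ g(1)] X(2) by blast
    qed
    have "X \<subset> Y" using XY gY g(2) by blast
    then show "\<exists>Y. left_ideal Y \<and> (RP (tt ^ Suc k) \<subseteq> Y \<and> Y \<subseteq> RP (tt ^ k) \<and> dcc_in left_ideal Y) \<and> X \<subset> Y"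
      using PY Ysub dY X(2) by blast
  qed
  then show ?case by blast
qed

lemma caseA:
  assumes nil: "tt ^ n = 0"
  shows "artinian TYPE('a) \<and> principal_right_ideal_ring TYPE('a)"
proof -
  have dl: "dcc_in left_ideal (UNIV::'a set)" using dcc_left[OF nil, of 0 n] RP0 by simp
  have dr: "dcc_in right_ideal (UNIV::'a set)" using dcc_right[OF nil, of 0 n] RP0 by simp
  have "left_artinian TYPE('a)" using dl unfolding left_artinian_def dcc_in_def by blast
  moreover have "right_artinian TYPE('a)" using dr unfolding right_artinian_def dcc_in_def by blast
  moreover have "principal_right_ideal_ring TYPE('a)"
    unfolding principal_right_ideal_ring_def using right_ideal_principal unfolding RP_def by blast
  ultimately show ?thesis unfolding artinian_def by blast
qed


context
  assumes nn: "\<forall>n. tt ^ n \<noteq> 0"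
begin

lemma krull_step:
  assumes b: "\<forall>k. b \<in> RP (tt ^ k)"
  shows "\<exists>b'. (\<forall>k. b' \<in> RP (tt ^ k)) \<and> b = tt * b'"
proof -
  have "b \<in> RP (tt ^ 1)" using b by blast
  then obtain b' where bb: "b = tt * b'" unfolding RP_iff by auto
  have "b' \<in> RP (tt ^ m)" for m
  proof (rule ccontr)
    assume nb: "b' \<notin> RP (tt ^ m)"
    have "\<not> (\<exists>r. b' = tt ^ m * r)" using nb unfolding RP_iff .
    then obtain r where r: "tt ^ m = b' * r" using chainA[of b' "tt ^ m"] by blast
    obtain s where s: "b = tt ^ Suc (Suc m) * s" using b unfolding RP_iff by blast
    have "tt ^ Suc m = tt * (b' * r)" using r by simp
    also have "\<dots> = b * r" using bb by (simp add: mult.assoc)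
    also have "\<dots> = tt ^ Suc (Suc m) * s * r" using s by simp
    also have "\<dots> = tt ^ Suc m * (tt * s * r)" by (simp only: power_Suc2 mult.assoc)
    finally have "tt ^ Suc m * 1 - tt ^ Suc m * (tt * s * r) = 0" by simp
    then have e: "tt ^ Suc m * (1 - tt * s * r) = 0" by (simp only: right_diff_distrib)
    have "tt * s * r \<in> M" using tt_M M_rmult by blast
    then have "1 - tt * s * r \<notin> M" by (rule one_minus)
    then have "tt ^ Suc m = 0" using cancel_r e by blast
    then show False using nn by blast
  qed
  then show ?thesis using bb by blast
qed

lemma krull:
  assumes x: "\<forall>k. x \<in> RP (tt ^ k)"
  shows "x = 0"
proof (rule ccontr)
  assume x0: "x \<noteq> 0"
  have "\<exists>X. left_ideal X \<and> (\<exists>b. (\<forall>k. b \<in> RP (tt ^ k)) \<and> b \<noteq> 0 \<and> X = LP b) \<and> False"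
  proof (rule acc_reach[OF left_acc, where A = "LP x"
        and Q = "\<lambda>X. \<exists>b. (\<forall>k. b \<in> RP (tt ^ k)) \<and> b \<noteq> 0 \<and> X = LP b" and G = "\<lambda>X. False"])
    show "left_ideal (LP x)" by (rule LP_left)
    show "\<exists>b. (\<forall>k. b \<in> RP (tt ^ k)) \<and> b \<noteq> 0 \<and> LP x = LP b" using x x0 by blast
  next
    fix X assume X: "left_ideal X" "\<exists>b. (\<forall>k. b \<in> RP (tt ^ k)) \<and> b \<noteq> 0 \<and> X = LP b"
    then obtain b where b: "\<forall>k. b \<in> RP (tt ^ k)" "b \<noteq> 0" "X = LP b" by blast
    obtain b' where b': "\<forall>k. b' \<in> RP (tt ^ k)" "b = tt * b'" using krull_step[OF b(1)] by blast
    have b'0: "b' \<noteq> 0" using b'(2) b(2) by auto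
    have sub: "X \<subseteq> LP b'"
    proof
      fix y assume "y \<in> X"
      then obtain r where "y = r * b" using b(3) LP_iff by blast
      then have "y = (r * tt) * b'" using b'(2) by (simp add: mult.assoc)
      then show "y \<in> LP b'" unfolding LP_iff by blast
    qed
    have "b' \<notin> X"
    proof
      assume "b' \<in> X"
      then obtain r where r: "b' = r * b" using b(3) LP_iff by blast
      then have "b' = (r * tt) * b'" using b'(2) by (simp add: mult.assoc)
      then have "1 * b' - (r * tt) * b' = 0" by simp
      then have e: "(1 - r * tt) * b' = 0" by (simp only: left_diff_distrib)
      have "r * tt \<in> M" using tt_M M_lmult by blast
      then have "1 - r * tt \<notin> M" by (rule one_minus)
      then have "b' = 0" using cancel_l e by blast
      then show False using b'0 by blast
    qed
    moreover have "b' \<in> LP b'" unfolding LP_iff by (intro exI[of _ 1]) simp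
    ultimately have "X \<subset> LP b'" using sub by blast
    then show "\<exists>Y. left_ideal Y \<and> (\<exists>b. (\<forall>k. b \<in> RP (tt ^ k)) \<and> b \<noteq> 0 \<and> Y = LP b) \<and> X \<subset> Y"
      using LP_left b'(1) b'0 by blast
  qed
  then show False by blast
qed

lemma val_nz: assumes "x \<noteq> 0" shows "\<exists>k u. u \<notin> M \<and> x = tt ^ k * u"
proof -
  obtain m where "x \<notin> RP (tt ^ m)" using krull assms by blast
  then show ?thesis using val_exists by blast
qed

lemma unit_t: assumes u: "u \<notin> M" shows "\<exists>u'. u' \<notin> M \<and> u * tt = tt * u'"
proof -
  obtain w where w: "u * tt = tt * w" using comm1 by blast
  have "w \<notin> M"
  proof
    assume "w \<in> M"
    then obtain w1 where w1: "w = tt * w1" unfolding M_iff by blast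
    obtain v where v: "v * u = 1" using unit u by blast
    obtain w2 where w2: "v * tt = tt * w2" using comm1 by blast
    have "tt = (v * u) * tt" using v by simp
    also have "\<dots> = v * (tt * tt * w1)" using w w1 by (simp add: mult.assoc)
    also have "\<dots> = (v * tt) * tt * w1" by (simp add: mult.assoc)
    also have "\<dots> = tt * (w2 * tt * w1)" using w2 by (simp add: mult.assoc)
    finally have "tt * 1 - tt * (w2 * tt * w1) = 0" by simp
    then have e: "tt * (1 - w2 * tt * w1) = 0" by (simp only: right_diff_distrib)
    have "w2 * tt * w1 \<in> M" using tt_M M_lmult M_rmult by blast
    then have "1 - w2 * tt * w1 \<notin> M" by (rule one_minus)
    then have "tt = 0" using cancel_r e by blast
    then have "tt ^ 1 = 0" by simp
    then show False using nn by blast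
  qed
  then show ?thesis using w by blast
qed

lemma unit_tk: assumes u: "u \<notin> M" shows "\<exists>u'. u' \<notin> M \<and> u * tt ^ k = tt ^ k * u'"
  using u
proof (induction k arbitrary: u)
  case 0 then show ?case by (intro exI[of _ u]) simp
next
  case (Suc k)
  obtain u1 where u1: "u1 \<notin> M" "u * tt ^ k = tt ^ k * u1" using Suc by blast
  obtain u2 where u2: "u2 \<notin> M" "u1 * tt = tt * u2" using unit_t u1(1) by blast
  have "u * tt ^ Suc k = (u * tt ^ k) * tt" by (simp only: power_Suc2 mult.assoc)
  also have "\<dots> = tt ^ k * (u1 * tt)" using u1 by (simp add: mult.assoc)
  also have "\<dots> = tt ^ Suc k * u2" using u2 by (simp only: power_Suc2 mult.assoc)
  finally show ?case using u2(1) by blast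
qed

lemma units_mult: assumes "u \<notin> M" "v \<notin> M" shows "u * v \<notin> M"
proof
  assume uv: "u * v \<in> M"
  obtain u1 where u1: "u1 * u = 1" using unit assms(1) by blast
  obtain v1 where v1: "v1 * v = 1" using unit assms(2) by blast
  have "(v1 * u1) * (u * v) = v1 * (u1 * u) * v" by (simp add: mult.assoc)
  also have "\<dots> = 1" using u1 v1 by simp
  finally have "(v1 * u1) * (u * v) = 1" .
  moreover have "(v1 * u1) * (u * v) \<in> M" using uv M_lmult by blast
  ultimately show False using one_notin by simp
qed

lemma tku_nz: assumes "u \<notin> M" shows "tt ^ k * u \<noteq> 0"
  using cancel_r[OF assms, of "tt ^ k"] nn by blast

lemma domain: fixes a b :: 'a assumes "a \<noteq> 0" "b \<noteq> 0" shows "a * b \<noteq> 0"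
proof -
  obtain k u where a: "u \<notin> M" "a = tt ^ k * u" using val_nz assms(1) by blast
  obtain j v where b: "v \<notin> M" "b = tt ^ j * v" using val_nz assms(2) by blast
  obtain u' where u': "u' \<notin> M" "u * tt ^ j = tt ^ j * u'" using unit_tk a(1) by blast
  have "a * b = tt ^ k * (u * tt ^ j) * v" using a b by (simp add: mult.assoc)
  also have "\<dots> = tt ^ (k + j) * (u' * v)" using u' by (simp add: mult.assoc power_add)
  finally show ?thesis using tku_nz units_mult u'(1) b(1) by simp
qed

lemma val_lt: assumes "\<alpha> \<notin> M" "\<beta> \<notin> M" "tt ^ i * \<alpha> = tt ^ j * \<beta>" "i < j" shows False
proof -
  obtain m where m0: "j = Suc (i + m)" using less_imp_Suc_add[OF assms(4)] by blast
  then have m: "j = i + Suc m" by simp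
  have "tt ^ j = tt ^ i * (tt * tt ^ m)" unfolding m by (simp only: power_add power_Suc)
  then have "tt ^ i * \<alpha> - tt ^ i * ((tt * tt ^ m) * \<beta>) = 0" using assms(3) by (simp add: mult.assoc)
  then have "tt ^ i * (\<alpha> - (tt * tt ^ m) * \<beta>) = 0" by (simp only: right_diff_distrib)
  then have "\<alpha> - (tt * tt ^ m) * \<beta> = 0" using domain nn by blast
  then have "\<alpha> = tt * (tt ^ m * \<beta>)" by (simp add: mult.assoc)
  then have "\<alpha> \<in> M" unfolding M_iff by blast
  then show False using assms(1) by blast
qed

lemma val_unique: assumes "\<alpha> \<notin> M" "\<beta> \<notin> M" "tt ^ i * \<alpha> = tt ^ j * \<beta>" shows "i = j"
proof -
  have "\<not> i < j" using val_lt assms by blast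
  moreover have "\<not> j < i" using val_lt[of \<beta> \<alpha> j i] assms by metis
  ultimately show ?thesis by simp
qed


lemma left_ore:
  fixes p q :: 'a
  assumes p0: "p \<noteq> 0" and q0: "q \<noteq> 0"
  shows "\<exists>a b. a * p = b * q \<and> a * p \<noteq> 0"
proof (rule ccontr)
  assume "\<not> ?thesis"
  then have dis: "\<And>a b. a * p = b * q \<Longrightarrow> a * p = 0" by blast
  define L where "L n = {(\<Sum>i\<le>n. r i * (q * p ^ i)) | r. True}" for n
  have notin: "q * p ^ Suc n \<noteq> (\<Sum>i\<le>n. r i * (q * p ^ i))" for n r
  proof (induction n arbitrary: r)
    case 0
    show ?case
    proof
      assume "q * p ^ Suc 0 = (\<Sum>i\<le>0. r i * (q * p ^ i))"
      then have "q * p = r 0 * q" by simp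
      then have "q * p = 0" using dis by blast
      then show False using domain p0 q0 by blast
    qed
  next
    case (Suc n)
    show ?case
    proof
      assume h: "q * p ^ Suc (Suc n) = (\<Sum>i\<le>Suc n. r i * (q * p ^ i))"
      define S' where "S' = (\<Sum>i\<le>n. r (Suc i) * (q * p ^ i))"
      have "(\<Sum>i\<le>Suc n. r i * (q * p ^ i)) = r 0 * (q * p ^ 0) + (\<Sum>i\<le>n. r (Suc i) * (q * p ^ Suc i))"
        by (rule sum.atMost_Suc_shift)
      also have "(\<Sum>i\<le>n. r (Suc i) * (q * p ^ Suc i)) = S' * p"
        unfolding S'_def sum_distrib_right by (simp only: power_Suc2 mult.assoc)
      finally have "q * p ^ Suc (Suc n) = r 0 * q + S' * p" using h by simp
      moreover have "q * p ^ Suc (Suc n) = (q * p ^ Suc n) * p" by (simp only: power_Suc2 mult.assoc)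
      ultimately have "(q * p ^ Suc n) * p - S' * p = r 0 * q" by (simp add: algebra_simps)
      then have "(q * p ^ Suc n - S') * p = r 0 * q" by (simp only: left_diff_distrib)
      then have "(q * p ^ Suc n - S') * p = 0" using dis by blast
      then have "q * p ^ Suc n - S' = 0" using domain p0 by blast
      then have "q * p ^ Suc n = (\<Sum>i\<le>n. r (Suc i) * (q * p ^ i))" unfolding S'_def by simp
      then show False using Suc.IH[of "\<lambda>i. r (Suc i)"] by blast
    qed
  qed
  have memI: "x \<in> L n" if "x = (\<Sum>i\<le>n. r i * (q * p ^ i))" for x n r
    unfolding L_def using that by blast
  have Lli: "left_ideal (L n)" for n
    unfolding left_ideal_def
  proof (intro conjI ballI allI impI)
    show "0 \<in> L n" unfolding L_def by (rule CollectI, rule exI[of _ "\<lambda>i. 0"]) simp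
  next
    fix x y assume "x \<in> L n" "y \<in> L n"
    then obtain r s where rs: "x = (\<Sum>i\<le>n. r i * (q * p ^ i))" "y = (\<Sum>i\<le>n. s i * (q * p ^ i))"
      unfolding L_def by blast
    have "x + y = (\<Sum>i\<le>n. (r i + s i) * (q * p ^ i))" unfolding rs by (simp add: distrib_right sum.distrib)
    then show "x + y \<in> L n" by (rule memI)
  next
    fix x assume "x \<in> L n"
    then obtain r where rs: "x = (\<Sum>i\<le>n. r i * (q * p ^ i))" unfolding L_def by blast
    have "- x = (\<Sum>i\<le>n. (- r i) * (q * p ^ i))" unfolding rs by (simp add: sum_negf)
    then show "- x \<in> L n" by (rule memI)
  next
    fix c x assume "x \<in> L n"
    then obtain r where rs: "x = (\<Sum>i\<le>n. r i * (q * p ^ i))" unfolding L_def by blast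
    have "c * x = (\<Sum>i\<le>n. (c * r i) * (q * p ^ i))" unfolding rs by (simp add: sum_distrib_left mult.assoc)
    then show "c * x \<in> L n" by (rule memI)
  qed
  have Lsub: "L n \<subseteq> L (Suc n)" for n
  proof
    fix x assume "x \<in> L n"
    then obtain r where rs: "x = (\<Sum>i\<le>n. r i * (q * p ^ i))" unfolding L_def by blast
    define r' :: "nat \<Rightarrow> 'a" where "r' i = (if i \<le> n then r i else 0)" for i
    have "(\<Sum>i\<le>Suc n. r' i * (q * p ^ i)) = (\<Sum>i\<le>n. r' i * (q * p ^ i)) + r' (Suc n) * (q * p ^ Suc n)"
      by (rule sum.atMost_Suc)
    also have "\<dots> = (\<Sum>i\<le>n. r i * (q * p ^ i))" unfolding r'_def by simp
    finally have "x = (\<Sum>i\<le>Suc n. r' i * (q * p ^ i))" using rs by simp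
    then show "x \<in> L (Suc n)" by (rule memI)
  qed
  have inS: "q * p ^ Suc n \<in> L (Suc n)" for n
  proof -
    define r :: "nat \<Rightarrow> 'a" where "r i = (if i = Suc n then 1 else 0)" for i
    have "(\<Sum>i\<le>Suc n. r i * (q * p ^ i)) = (\<Sum>i\<le>n. r i * (q * p ^ i)) + r (Suc n) * (q * p ^ Suc n)"
      by (rule sum.atMost_Suc)
    also have "(\<Sum>i\<le>n. r i * (q * p ^ i)) = 0" unfolding r_def by (intro sum.neutral) simp
    finally have "q * p ^ Suc n = (\<Sum>i\<le>Suc n. r i * (q * p ^ i))" unfolding r_def by simp
    then show ?thesis by (rule memI)
  qed
  have notL: "q * p ^ Suc n \<notin> L n" for n
  proof
    assume "q * p ^ Suc n \<in> L n"
    then obtain r where "q * p ^ Suc n = (\<Sum>i\<le>n. r i * (q * p ^ i))" unfolding L_def by blast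
    then show False using notin by blast
  qed
  have "\<exists>X. left_ideal X \<and> (\<exists>n. X = L n) \<and> False"
  proof (rule acc_reach[OF left_acc, where A = "L 0" and Q = "\<lambda>X. \<exists>n. X = L n" and G = "\<lambda>X. False"])
    show "left_ideal (L 0)" by (rule Lli)
    show "\<exists>n. L 0 = L n" by blast
  next
    fix X assume "left_ideal X" "\<exists>n. X = L n"
    then obtain n where n: "X = L n" by blast
    have "L n \<subset> L (Suc n)" using Lsub inS notL by blast
    then show "\<exists>Y. left_ideal Y \<and> (\<exists>n. Y = L n) \<and> X \<subset> Y" using n Lli by blast
  qed
  then show False by blast
qed

lemma t_unit_left: assumes u: "u \<notin> M" shows "\<exists>s. tt * u = s * tt"
proof -
  have t0: "tt \<noteq> 0" using nn[rule_format, of 1] by simp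
  have tu0: "tt * u \<noteq> 0" using tku_nz[OF u, of 1] by simp
  obtain a b where ab: "a * tt = b * (tt * u)" "a * tt \<noteq> 0" using left_ore[OF t0 tu0] by blast
  have a0: "a \<noteq> 0" using ab(2) by auto
  have b0: "b \<noteq> 0" using ab by auto
  obtain i \<alpha> where \<alpha>: "\<alpha> \<notin> M" "a = tt ^ i * \<alpha>" using val_nz a0 by blast
  obtain j \<beta> where \<beta>: "\<beta> \<notin> M" "b = tt ^ j * \<beta>" using val_nz b0 by blast
  obtain \<alpha>' where \<alpha>': "\<alpha>' \<notin> M" "\<alpha> * tt = tt * \<alpha>'" using unit_t \<alpha>(1) by blast
  obtain \<beta>' where \<beta>': "\<beta>' \<notin> M" "\<beta> * tt = tt * \<beta>'" using unit_t \<beta>(1) by blast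
  have ea: "a * tt = tt ^ Suc i * \<alpha>'"
  proof -
    have "a * tt = tt ^ i * (\<alpha> * tt)" using \<alpha>(2) by (simp add: mult.assoc)
    also have "\<dots> = tt ^ Suc i * \<alpha>'" using \<alpha>'(2) by (simp only: power_Suc2 mult.assoc)
    finally show ?thesis .
  qed
  have eb: "b * (tt * u) = tt ^ Suc j * (\<beta>' * u)"
  proof -
    have "b * (tt * u) = tt ^ j * (\<beta> * tt) * u" using \<beta>(2) by (simp add: mult.assoc)
    also have "\<dots> = tt ^ Suc j * (\<beta>' * u)" using \<beta>'(2) by (simp only: power_Suc2 mult.assoc)
    finally show ?thesis .
  qed
  have eq: "tt ^ Suc i * \<alpha>' = tt ^ Suc j * (\<beta>' * u)" using ab(1) ea eb by simp
  have "Suc i = Suc j" using val_unique[OF \<alpha>'(1) units_mult[OF \<beta>'(1) u] eq] .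
  then have "tt ^ Suc i * \<alpha>' - tt ^ Suc i * (\<beta>' * u) = 0" using eq by simp
  then have "tt ^ Suc i * (\<alpha>' - \<beta>' * u) = 0" by (simp only: right_diff_distrib)
  then have "\<alpha>' - \<beta>' * u = 0" using domain nn by blast
  then have ab': "\<alpha>' = \<beta>' * u" by simp
  obtain y where y: "y * \<beta>' = 1" "\<beta>' * y = 1" using unit \<beta>'(1) by blast
  obtain z where z: "z * \<beta> = 1" using unit \<beta>(1) by blast
  have uy: "u = y * \<alpha>'" using ab' y(1) by (simp add: mult.assoc[symmetric])
  have "tt = \<beta> * tt * y" using \<beta>'(2) y(2) by (simp add: mult.assoc)
  then have "z * tt = (z * \<beta>) * tt * y" by (simp add: mult.assoc)
  then have zt: "z * tt = tt * y" using z by simp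
  have "tt * u = (tt * y) * \<alpha>'" using uy by (simp add: mult.assoc)
  also have "\<dots> = z * (tt * \<alpha>')" using zt by (simp add: mult.assoc[symmetric])
  also have "\<dots> = (z * \<alpha>) * tt" using \<alpha>'(2) by (simp add: mult.assoc)
  finally show ?thesis by blast
qed

lemma t_left: "\<exists>s. tt * w = s * tt"
proof (cases "w = 0")
  case True then show ?thesis by (intro exI[of _ 0]) simp
next
  case False
  then obtain k u where u: "u \<notin> M" "w = tt ^ k * u" using val_nz by blast
  obtain s where s: "tt * u = s * tt" using t_unit_left u(1) by blast
  have "tt * w = tt ^ k * (tt * u)" using u(2) by (simp add: mult.assoc[symmetric] power_commutes)
  also have "\<dots> = (tt ^ k * s) * tt" using s by (simp add: mult.assoc)
  finally show ?thesis by blast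
qed

lemma tk_left: "\<exists>s. tt ^ k * w = s * tt ^ k"
proof (induction k arbitrary: w)
  case 0 then show ?case by (intro exI[of _ w]) simp
next
  case (Suc k)
  obtain s where s: "tt ^ k * w = s * tt ^ k" using Suc by blast
  obtain s' where s': "tt * s = s' * tt" using t_left by blast
  have "tt ^ Suc k * w = tt * (tt ^ k * w)" by (simp add: mult.assoc)
  also have "\<dots> = (tt * s) * tt ^ k" using s by (simp add: mult.assoc)
  also have "\<dots> = s' * tt ^ Suc k" using s' by (simp add: mult.assoc)
  finally show ?case by blast
qed

lemma LP_RP: "LP (tt ^ k) = RP (tt ^ k)"
proof
  show "LP (tt ^ k) \<subseteq> RP (tt ^ k)"
  proof
    fix x assume "x \<in> LP (tt ^ k)"
    then obtain r where "x = r * tt ^ k" unfolding LP_iff by blast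
    moreover obtain r' where "r * tt ^ k = tt ^ k * r'" using commk by blast
    ultimately show "x \<in> RP (tt ^ k)" unfolding RP_iff by blast
  qed
next
  show "RP (tt ^ k) \<subseteq> LP (tt ^ k)"
  proof
    fix x assume "x \<in> RP (tt ^ k)"
    then obtain r where "x = tt ^ k * r" unfolding RP_iff by blast
    moreover obtain r' where "tt ^ k * r = r' * tt ^ k" using tk_left by blast
    ultimately show "x \<in> LP (tt ^ k)" unfolding LP_iff by blast
  qed
qed

lemma caseB:
  shows "prime_ring TYPE('a) \<and> (\<forall>I::'a set. two_sided_ideal I \<longrightarrow>
             (\<exists>a. I = {r * a | r. True}) \<and> (\<exists>b. I = {b * r | r. True}))"
proof (rule conjI)
  show "prime_ring TYPE('a)" unfolding prime_ring_def
  proof (intro conjI allI impI)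
    show "(0::'a) \<noteq> 1" by simp
  next
    fix a b :: 'a assume "\<forall>r. a * r * b = 0"
    then have "a * 1 * b = 0" by blast
    then show "a = 0 \<or> b = 0" using domain by auto
  qed
next
  show "\<forall>I::'a set. two_sided_ideal I \<longrightarrow>
             (\<exists>a. I = {r * a | r. True}) \<and> (\<exists>b. I = {b * r | r. True})"
  proof (intro allI impI)
  fix I :: "'a set" assume I: "two_sided_ideal I"
  have Il: "left_ideal I" and Ir: "right_ideal I" using I unfolding two_sided_ideal_def by auto
  have "\<exists>c. I = LP c \<and> I = RP c"
  proof (cases "\<forall>z\<in>I. z = 0")
    case True
    have "0 \<in> I" using Il unfolding left_ideal_def by blast
    then have "I = {0}" using True by blast
    moreover have "LP 0 = {0::'a}" by (auto simp: LP_iff)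
    moreover have "RP 0 = {0::'a}" by (auto simp: RP_iff)
    ultimately show ?thesis by metis
  next
    case False
    then obtain z where z: "z \<in> I" "z \<noteq> 0" by blast
    then obtain k u where u: "u \<notin> M" "z = tt ^ k * u" using val_nz by blast
    obtain v where v: "u * v = 1" using unit u(1) by blast
    have "z * v \<in> I" using Ir z(1) unfolding right_ideal_def by blast
    moreover have "z * v = tt ^ k" using u(2) v by (simp add: mult.assoc)
    ultimately have tkI: "tt ^ k \<in> I" by simp
    define k0 where "k0 = (LEAST k. tt ^ k \<in> I)"
    have k0I: "tt ^ k0 \<in> I" unfolding k0_def by (rule LeastI[of _ k]) (rule tkI)
    have "I = RP (tt ^ k0)"
    proof
      show "RP (tt ^ k0) \<subseteq> I"
      proof
        fix y assume "y \<in> RP (tt ^ k0)"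
        then obtain r where "y = tt ^ k0 * r" unfolding RP_iff by blast
        moreover have "tt ^ k0 * r \<in> I" using Ir k0I unfolding right_ideal_def by blast
        ultimately show "y \<in> I" by simp
      qed
    next
      show "I \<subseteq> RP (tt ^ k0)"
      proof
        fix x assume xI: "x \<in> I"
        show "x \<in> RP (tt ^ k0)"
        proof (cases "x = 0")
          case True then show ?thesis unfolding RP_iff by (intro exI[of _ 0]) simp
        next
          case False
          then obtain j u' where u': "u' \<notin> M" "x = tt ^ j * u'" using val_nz by blast
          obtain v' where v': "u' * v' = 1" using unit u'(1) by blast
          have "x * v' \<in> I" using Ir xI unfolding right_ideal_def by blast
          moreover have "x * v' = tt ^ j" using u'(2) v' by (simp add: mult.assoc)
          ultimately have "tt ^ j \<in> I" by simp
          then have "k0 \<le> j" unfolding k0_def by (rule Least_le)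
          then have "tt ^ j = tt ^ (k0 + (j - k0))" by simp
          also have "\<dots> = tt ^ k0 * tt ^ (j - k0)" by (rule power_add)
          finally have "tt ^ j = tt ^ k0 * tt ^ (j - k0)" .
          then have "x = tt ^ k0 * (tt ^ (j - k0) * u')" using u'(2) by (simp add: mult.assoc)
          then show ?thesis unfolding RP_iff by blast
        qed
      qed
    qed
    then show ?thesis using LP_RP[of k0] by blast
  qed
  then obtain c where c: "I = LP c" "I = RP c" by blast
  have "I = {r * c | r. True}" using c(1) unfolding LP_def .
  moreover have "I = {c * r | r. True}" using c(2) unfolding RP_def .
  ultimately show "(\<exists>a. I = {r * a | r. True}) \<and> (\<exists>b. I = {b * r | r. True})" by blast
  qed
qed

end

end

theorem theorem2p8:
  assumes "local_ring TYPE('a::ring_1)"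
    and "noetherian TYPE('a)"
    and "\<forall>N::('a \<times> 'a) set. left_submodule2 N \<longrightarrow> quot2_dsum_cyclic N"
  shows "(artinian TYPE('a) \<and> principal_left_ideal_ring TYPE('a))
       \<or> (artinian TYPE('a) \<and> principal_right_ideal_ring TYPE('a))
       \<or> (prime_ring TYPE('a) \<and> (\<forall>I::'a set. two_sided_ideal I \<longrightarrow>
             (\<exists>a. I = {r * a | r. True}) \<and> (\<exists>b. I = {b * r | r. True})))"
proof -
  obtain M :: "'a set" where M: "maximal_left_ideal M" and U: "\<And>N. maximal_left_ideal N \<Longrightarrow> N = M"
    using assms(1) unfolding local_ring_def by blast
  interpret lr M
  proof
    show "maximal_left_ideal M" by (rule M)
    show "\<And>N. maximal_left_ideal N \<Longrightarrow> N = M" by (rule U)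
    show "left_noetherian TYPE('a)" using assms(2) unfolding noetherian_def by blast
    show "right_noetherian TYPE('a)" using assms(2) unfolding noetherian_def by blast
    show "\<forall>N::('a \<times> 'a) set. left_submodule2 N \<longrightarrow> quot2_dsum_cyclic N" by (rule assms(3))
  qed
  show ?thesis
  proof (cases "\<exists>n. tt ^ n = 0")
    case True
    then obtain n where "tt ^ n = 0" by blast
    then show ?thesis using caseA by blast
  next
    case False
    then have "\<forall>n. tt ^ n \<noteq> 0" by blast
    then show ?thesis using caseB by blast
  qed
qed

end
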